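(* Let $(X,\mathcal{A},p)$ be a standard Borel probability space, let $e$ be a measure-preserving, $p$-a.s. idempotent Markov kernel on $(X,\mathcal{A},p)$, and let $\mathcal{B}\subseteq\mathcal{A}$ be a sub-$\sigma$-algebra. Then $\mathcal{B}\subseteq\mathcal{I}_e$ if and only if $e_\mathcal{B}\le e$. In other words, the order-preserving assignment $\mathcal{B}\mapsto e_\mathcal{B}$ (from sub-$\sigma$-algebras ordered by inclusion to idempotents) is left adjoint to the order-preserving assignment $e\mapsto\mathcal{I}_e$.
   Context: Kernels are identified up to $p$-a.s. equality (for each $B$, equal $p$-a.e.), with composition $(\ell\circ k)(C\mid x)=\int\ell(C\mid y)k(dy\mid x)$. $e$ is $p$-a.s. idempotent if $e\circ e=e$ a.s. $\mathcal{I}_e=\{B\in\mathcal{A}: e(B\mid x)=1_B(x)$ for $p$-a.a. $x\}$. $e_\mathcal{B}$ is the (a.s.-class of the) kernel $e_\mathcal{B}(A\mid x)=\mathbb{P}[A\mid\mathcal{B}](x)=\mathbb{E}[1_A\mid\mathcal{B}](x)$, a regular conditional probability. The order on idempotents: $e_1\le e_2$ iff $e_1\circ e_2=e_2\circ e_1=e_1$ almost surely. *)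

theory Defs
  imports "HOL-Probability.Probability"
begin

(* Markov kernels on the measurable space of M are maps into the Giry
   probability algebra: k \<in> M \<rightarrow>\<^sub>M prob_algebra M, with k(B|x) = measure (k x) B. *)

definition markov_kernel :: "'a measure \<Rightarrow> ('a \<Rightarrow> 'a measure) \<Rightarrow> bool" where
  "markov_kernel M k \<longleftrightarrow> k \<in> M \<rightarrow>\<^sub>M prob_algebra M"

definition kernel_preserves :: "'a measure \<Rightarrow> ('a \<Rightarrow> 'a measure) \<Rightarrow> bool" where
  "kernel_preserves M k \<longleftrightarrow> (\<forall>B\<in>sets M. (\<integral>x. measure (k x) B \<partial>M) = measure M B)"

definition kcomp :: "('a \<Rightarrow> 'a measure) \<Rightarrow> ('a \<Rightarrow> 'a measure) \<Rightarrow> ('a \<Rightarrow> 'a measure)" where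
  "kcomp l k = (\<lambda>x. k x \<bind> l)"

definition kernel_ae_eq :: "'a measure \<Rightarrow> ('a \<Rightarrow> 'a measure) \<Rightarrow> ('a \<Rightarrow> 'a measure) \<Rightarrow> bool" where
  "kernel_ae_eq M k l \<longleftrightarrow> (\<forall>B\<in>sets M. AE x in M. measure (k x) B = measure (l x) B)"

definition kernel_idempotent :: "'a measure \<Rightarrow> ('a \<Rightarrow> 'a measure) \<Rightarrow> bool" where
  "kernel_idempotent M e \<longleftrightarrow> kernel_ae_eq M (kcomp e e) e"

definition invariant_sets :: "'a measure \<Rightarrow> ('a \<Rightarrow> 'a measure) \<Rightarrow> 'a set set" where
  "invariant_sets M e = {B \<in> sets M. AE x in M. measure (e x) B = indicator B x}"

definition kernel_le :: "'a measure \<Rightarrow> ('a \<Rightarrow> 'a measure) \<Rightarrow> ('a \<Rightarrow> 'a measure) \<Rightarrow> bool" where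
  "kernel_le M e1 e2 \<longleftrightarrow> kernel_ae_eq M (kcomp e1 e2) e1 \<and> kernel_ae_eq M (kcomp e2 e1) e1"

definition is_reg_cond_prob :: "'a measure \<Rightarrow> 'a measure \<Rightarrow> ('a \<Rightarrow> 'a measure) \<Rightarrow> bool" where
  "is_reg_cond_prob M F k \<longleftrightarrow> markov_kernel M k \<and>
     (\<forall>A\<in>sets M. AE x in M. measure (k x) A = real_cond_exp M F (indicator A) x)"

end

theory Submission
  imports Defs
begin

lemma mk_basic:
  assumes "markov_kernel M k" "x \<in> space M"
  shows "sets (k x) = sets M" "prob_space (k x)" "space (k x) = space M"
proof -
  have "k x \<in> space (prob_algebra M)"
    by (rule measurable_space[OF assms(1)[unfolded markov_kernel_def] assms(2)])
  then show 1: "sets (k x) = sets M" and "prob_space (k x)" by (auto simp: space_prob_algebra)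
  from 1 show "space (k x) = space M" by (rule sets_eq_imp_space_eq)
qed

lemma mk_meas:
  assumes "markov_kernel M k" "C \<in> sets M"
  shows "(\<lambda>x. measure (k x) C) \<in> borel_measurable M"
  using measurable_compose[OF assms(1)[unfolded markov_kernel_def] measurable_measure_prob_algebra[OF assms(2)]] .

lemma int_bounded:
  fixes f :: "'a \<Rightarrow> real"
  assumes "prob_space N" "f \<in> borel_measurable N" "\<And>y. y \<in> space N \<Longrightarrow> \<bar>f y\<bar> \<le> c"
  shows "integrable N f"
proof -
  interpret prob_space N by fact
  show ?thesis by (rule integrable_const_bound[of _ c]) (use assms in auto)
qed

lemma meas_in_kernel:
  assumes "markov_kernel M k" "x \<in> space M" "f \<in> M \<rightarrow>\<^sub>M N"
  shows "f \<in> k x \<rightarrow>\<^sub>M N"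
  by (subst measurable_cong_sets[OF mk_basic(1)[OF assms(1,2)] refl]) (rule assms(3))

lemma measure_le1: "prob_space N \<Longrightarrow> \<bar>measure N A\<bar> \<le> 1"
  by (simp add: prob_space.prob_le_1)

lemma pemeq: "prob_space N \<Longrightarrow> emeasure N A = ennreal (measure N A)"
proof -
  assume "prob_space N"
  then interpret prob_space N .
  show ?thesis by (rule emeasure_eq_measure)
qed

lemma kcomp_measure:
  assumes k: "markov_kernel M k" and l: "markov_kernel M l" and x: "x \<in> space M" and C: "C \<in> sets M"
  shows "measure (kcomp l k x) C = (\<integral>y. measure (l y) C \<partial>(k x))"
proof -
  have kx: "k x \<in> space (prob_algebra M)"
    by (rule measurable_space[OF k[unfolded markov_kernel_def] x])
  have "emeasure (kcomp l k x) C = (\<integral>\<^sup>+y. emeasure (l y) C \<partial>(k x))"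
    unfolding kcomp_def using emeasure_bind_prob_algebra[OF kx l[unfolded markov_kernel_def] C] by simp
  also have "\<dots> = (\<integral>\<^sup>+y. ennreal (measure (l y) C) \<partial>(k x))"
    by (rule nn_integral_cong) (simp add: mk_basic[OF k x] mk_basic[OF l] pemeq)
  also have "\<dots> = ennreal (\<integral>y. measure (l y) C \<partial>(k x))"
    by (rule nn_integral_eq_integral)
       (auto intro!: int_bounded[of _ _ 1] mk_basic[OF k x] meas_in_kernel[OF k x] mk_meas[OF l C] measure_le1
             simp: mk_basic[OF k x] mk_basic[OF l])
  finally show ?thesis
    by (simp add: measure_def integral_nonneg_AE)
qed


lemma null_pres:
  assumes "prob_space M" "markov_kernel M e" "kernel_preserves M e" "N \<in> null_sets M"
  shows "AE x in M. measure (e x) N = 0"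
proof -
  have N: "N \<in> sets M" using assms(4) by auto
  have "(\<integral>x. measure (e x) N \<partial>M) = measure M N" using assms(3) N unfolding kernel_preserves_def by auto
  also have "\<dots> = 0" using assms(4) by (simp add: measure_def null_setsD1)
  finally have z: "(\<integral>x. measure (e x) N \<partial>M) = 0" .
  have i: "integrable M (\<lambda>x. measure (e x) N)"
    by (rule int_bounded[OF assms(1) mk_meas[OF assms(2) N], of 1]) (use mk_basic(2)[OF assms(2)] in \<open>simp add: prob_space.prob_le_1\<close>)
  show ?thesis using integral_nonneg_eq_0_iff_AE[OF i] z by simp
qed

lemma ae_cong_kernel:
  fixes f g :: "'a \<Rightarrow> real"
  assumes "prob_space M" "markov_kernel M e" "kernel_preserves M e"
    and fm: "f \<in> borel_measurable M" and gm: "g \<in> borel_measurable M" and ae: "AE y in M. f y = g y"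
  shows "AE x in M. (\<integral>y. f y \<partial>e x) = (\<integral>y. g y \<partial>e x)"
proof -
  let ?N = "{y \<in> space M. f y \<noteq> g y}"
  have Ns: "?N \<in> sets M" using fm gm by measurable
  have "?N \<in> null_sets M" using ae Ns AE_iff_measurable[of ?N M "\<lambda>y. f y = g y"] by auto
  then have "AE x in M. measure (e x) ?N = 0" by (rule null_pres[OF assms(1-3)])
  then show ?thesis using AE_space
  proof eventually_elim
    case (elim x)
    have Nx: "?N \<in> sets (e x)" using Ns mk_basic[OF assms(2) elim(2)] by simp
    have "emeasure (e x) ?N = 0" using elim pemeq[OF mk_basic(2)[OF assms(2) elim(2)]] by simp
    then have "AE y in e x. y \<notin> ?N" using AE_iff_null_sets[OF Nx] Nx by auto
    then have "AE y in e x. f y = g y" using AE_space[of "e x"]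
      by eventually_elim (auto simp: mk_basic[OF assms(2) elim(2)])
    then show ?case
      by (rule integral_cong_AE[rotated 2]) (auto intro: meas_in_kernel[OF assms(2) elim(2)] fm gm)
  qed
qed

lemma inv_level:
  fixes h :: "'a \<Rightarrow> real"
  assumes e: "markov_kernel M e" and sub: "subalgebra M F" and inv: "sets F \<subseteq> invariant_sets M e"
    and hF: "h \<in> borel_measurable F"
  shows "AE x in M. (\<integral>y. h y \<partial>e x) = h x"
proof -
  define B where "B r = {y \<in> space M. real_of_rat r < h y}" for r
  have spF: "space F = space M" using sub unfolding subalgebra_def by simp
  have BF: "B r \<in> sets F" for r
  proof -
    have "{y \<in> space F. real_of_rat r < h y} \<in> sets F" using hF by measurable
    then show ?thesis unfolding B_def spF .
  qed
  have BM: "B r \<in> sets M" for r using BF sub unfolding subalgebra_def by auto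
  have hM: "h \<in> borel_measurable M" by (rule measurable_from_subalg[OF sub hF])
  have "AE x in M. measure (e x) (B r) = indicator (B r) x" for r
    using inv BF unfolding invariant_sets_def by auto
  hence "AE x in M. \<forall>r. measure (e x) (B r) = indicator (B r) x" by (simp add: AE_all_countable)
  then show ?thesis using AE_space
  proof eventually_elim
    case (elim x)
    interpret P: prob_space "e x" by (rule mk_basic(2)[OF e elim(2)])
    have sx: "sets (e x) = sets M" "space (e x) = space M" using mk_basic[OF e elim(2)] by auto
    have "AE y in e x. (real_of_rat r < h x \<longrightarrow> real_of_rat r < h y) \<and> (h x \<le> real_of_rat r \<longrightarrow> h y \<le> real_of_rat r)" for r
    proof (cases "real_of_rat r < h x")
      case True
      then have "x \<in> B r" using elim by (simp add: B_def)
      then have "P.prob (B r) = 1" using elim by simp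
      then have "AE y in e x. y \<in> B r" using P.AE_in_set_eq_1 BM sx by auto
      then show ?thesis by eventually_elim (use True in \<open>auto simp: B_def\<close>)
    next
      case False
      then have "x \<notin> B r" by (simp add: B_def)
      then have "P.prob (B r) = 0" using elim by simp
      then have "emeasure (e x) (B r) = 0" by (simp add: P.emeasure_eq_measure)
      then have nb: "AE y in e x. y \<notin> B r" using AE_iff_null_sets[of "B r" "e x"] BM sx by auto
      show ?thesis using nb AE_space[of "e x"] proof eventually_elim
        case (elim y) then show ?case using False apply (simp add: B_def sx) done
      qed
    qed
    then have "AE y in e x. \<forall>r. (real_of_rat r < h x \<longrightarrow> real_of_rat r < h y) \<and> (h x \<le> real_of_rat r \<longrightarrow> h y \<le> real_of_rat r)"
      by (simp add: AE_all_countable)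
    then have "AE y in e x. h y = h x"
    proof eventually_elim
      case (elim y)
      show ?case
      proof (rule ccontr)
        assume ne: "h y \<noteq> h x"
        show False
        proof (cases "h y < h x")
          case True
          then obtain r where "h y < real_of_rat r" "real_of_rat r < h x" using of_rat_dense by blast
          then show False using elim[rule_format, of r] by auto
        next
          case False
          then have "h x < h y" using ne by auto
          then obtain r where "h x < real_of_rat r" "real_of_rat r < h y" using of_rat_dense by blast
          then show False using elim[rule_format, of r] by auto
        qed
      qed
    qed
    then have "(\<integral>y. h y \<partial>e x) = (\<integral>y. h x \<partial>e x)"
      by (rule integral_cong_AE[rotated 2]) (auto intro: meas_in_kernel[OF e elim(2)] hM)
    also have "\<dots> = h x" by (simp add: P.prob_space)
    finally show ?case .
  qed
qed


lemma sfs: "prob_space M \<Longrightarrow> subalgebra M F \<Longrightarrow> sigma_finite_subalgebra M F"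
  by (intro finite_measure_subalgebra_is_sigma_finite finite_measure_subalgebra.intro
      finite_measure_subalgebra_axioms.intro) (auto simp: prob_space_def)

lemma rcp_set:
  assumes "prob_space M" "subalgebra M F" "is_reg_cond_prob M F k" "A \<in> sets M"
  shows "AE x in M. emeasure (k x) A = nn_cond_exp M F (indicator A) x"
proof -
  interpret S: sigma_finite_subalgebra M F by (rule sfs[OF assms(1,2)])
  have k: "markov_kernel M k" using assms(3) unfolding is_reg_cond_prob_def by simp
  have ae: "AE x in M. measure (k x) A = real_cond_exp M F (indicator A) x"
    using assms(3,4) unfolding is_reg_cond_prob_def by simp
  let ?c = "nn_cond_exp M F (indicator A)"
  have "AE x in M. ?c x \<le> nn_cond_exp M F (\<lambda>_. 1) x"
    by (rule S.nn_cond_exp_mono) (use assms(4) in \<open>auto simp: indicator_def\<close>)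
  moreover have "AE x in M. (\<lambda>_. 1) x = nn_cond_exp M F (\<lambda>_. 1) x"
    by (rule S.nn_cond_exp_F_meas) simp
  ultimately have c1: "AE x in M. ?c x \<le> 1" by eventually_elim simp
  have e0: "(\<lambda>x. ennreal (- indicator A x)) = (\<lambda>x. 0)"
  proof (rule ext)
    fix x show "ennreal (- indicator A x) = 0" by (cases "x \<in> A") (simp_all add: ennreal_neg)
  qed
  have "AE x in M. (\<lambda>_. 0) x = nn_cond_exp M F (\<lambda>_. 0) x"
    by (rule S.nn_cond_exp_F_meas) simp
  then have z: "AE x in M. nn_cond_exp M F (\<lambda>x. ennreal (- indicator A x)) x = 0"
    unfolding e0 by simp
  have ind: "(\<lambda>x. ennreal (indicator A x :: real)) = indicator A"
    by (auto simp: indicator_def fun_eq_iff)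
  show ?thesis using ae c1 z AE_space
  proof eventually_elim
    case (elim x)
    have "emeasure (k x) A = ennreal (measure (k x) A)" by (rule pemeq[OF mk_basic(2)[OF k elim(4)]])
    also have "\<dots> = ennreal (enn2real (?c x))"
    proof -
      have "real_cond_exp M F (indicator A) x = enn2real (?c x) - enn2real (nn_cond_exp M F (\<lambda>x. ennreal (- indicator A x)) x)"
        unfolding real_cond_exp_def ind by (rule refl)
      then show ?thesis using elim(1,3) by simp
    qed
    also have "\<dots> = ?c x"
    proof -
      have "?c x < top" using elim(2) ennreal_one_less_top by (rule le_less_trans)
      then show ?thesis by (intro ennreal_enn2real) simp
    qed
    finally show ?case .
  qed
qed

lemma rcp_nn:
  assumes "prob_space M" "subalgebra M F" "is_reg_cond_prob M F k" "u \<in> borel_measurable M"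
  shows "AE x in M. (\<integral>\<^sup>+y. u y \<partial>k x) = nn_cond_exp M F u x"
  using assms(4)
proof (induct rule: borel_measurable_induct)
  interpret S: sigma_finite_subalgebra M F by (rule sfs[OF assms(1,2)])
  have k: "markov_kernel M k" using assms(3) unfolding is_reg_cond_prob_def by simp
  {
    case (cong f g)
    have "AE x in M. nn_cond_exp M F f x = nn_cond_exp M F g x"
      by (rule S.nn_cond_exp_cong) (use cong in auto)
    then show ?case using cong(4) AE_space
    proof eventually_elim
      case (elim x)
      have "(\<integral>\<^sup>+y. f y \<partial>k x) = (\<integral>\<^sup>+y. g y \<partial>k x)"
        by (rule nn_integral_cong) (use cong(3) mk_basic[OF k elim(3)] in auto)
      then show ?case using elim by simp
    qed
  next
    case (set A)
    show ?case using rcp_set[OF assms(1-3) set] AE_space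
    proof eventually_elim
      case (elim x)
      then show ?case using set mk_basic[OF k elim(2)] by simp
    qed
  next
    case (mult u c)
    have "AE x in M. c * nn_cond_exp M F u x = nn_cond_exp M F (\<lambda>x. c * u x) x"
      by (rule S.nn_cond_exp_prod) (use mult in auto)
    then show ?case using mult(4) AE_space
    proof eventually_elim
      case (elim x)
      have "(\<integral>\<^sup>+y. c * u y \<partial>k x) = c * (\<integral>\<^sup>+y. u y \<partial>k x)"
        by (rule nn_integral_cmult) (rule meas_in_kernel[OF k elim(3) mult(2)])
      then show ?case using elim by simp
    qed
  next
    case (add u v)
    have "AE x in M. nn_cond_exp M F v x + nn_cond_exp M F u x = nn_cond_exp M F (\<lambda>x. v x + u x) x"
      by (rule S.nn_cond_exp_sum) (use add in auto)
    then show ?case using add(3) add(7) AE_space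
    proof eventually_elim
      case (elim x)
      have "(\<integral>\<^sup>+y. v y + u y \<partial>k x) = (\<integral>\<^sup>+y. v y \<partial>k x) + (\<integral>\<^sup>+y. u y \<partial>k x)"
        by (rule nn_integral_add) (auto intro: meas_in_kernel[OF k elim(4)] add)
      then show ?case using elim by simp
    qed
  next
    case (seq U)
    note [measurable] = seq(1)
    let ?g = "\<lambda>x. SUP i. nn_cond_exp M F (U i) x"
    have gF: "?g \<in> borel_measurable F" by measurable
    have mono: "AE x in M. nn_cond_exp M F (U i) x \<le> nn_cond_exp M F (U (Suc i)) x" for i
      by (rule S.nn_cond_exp_mono) (use seq(4) in \<open>auto simp: incseq_Suc_iff le_fun_def\<close>)
    have key: "AE x in M. ?g x = nn_cond_exp M F (SUP i. U i) x"
    proof (rule S.nn_cond_exp_charact)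
      fix A assume AF: "A \<in> sets F"
      then have AM: "A \<in> sets M" using assms(2) unfolding subalgebra_def by auto
      have iA: "indicator A \<in> borel_measurable F" using AF by simp
      have "(\<integral>\<^sup>+x. (SUP i. U i) x * indicator A x \<partial>M) = (\<integral>\<^sup>+x. (SUP i. U i x * indicator A x) \<partial>M)"
        by (intro nn_integral_cong, subst SUP_apply) (rule SUP_mult_right_ennreal)
      also have "\<dots> = (SUP i. \<integral>\<^sup>+x. U i x * indicator A x \<partial>M)"
        by (rule nn_integral_monotone_convergence_SUP)
           (use seq(4) AM in \<open>auto simp: incseq_def le_fun_def intro: mult_right_mono\<close>)
      also have "\<dots> = (SUP i. \<integral>\<^sup>+x. nn_cond_exp M F (U i) x * indicator A x \<partial>M)"
        using S.nn_cond_exp_intg[OF iA seq(1)] by (simp add: mult.commute)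
      also have "\<dots> = (\<integral>\<^sup>+x. (SUP i. nn_cond_exp M F (U i) x * indicator A x) \<partial>M)"
      proof (rule nn_integral_monotone_convergence_SUP_AE[symmetric])
        fix i
        show "AE x in M. nn_cond_exp M F (U i) x * indicator A x \<le> nn_cond_exp M F (U (Suc i)) x * indicator A x"
          using mono[of i] by eventually_elim (simp add: mult_right_mono)
        show "(\<lambda>x. nn_cond_exp M F (U i) x * indicator A x) \<in> borel_measurable M" using AM by measurable
      qed
      also have "\<dots> = (\<integral>\<^sup>+x. ?g x * indicator A x \<partial>M)"
        by (intro nn_integral_cong) (rule SUP_mult_right_ennreal[symmetric])
      finally show "(\<integral>\<^sup>+x\<in>A. (SUP i. U i) x \<partial>M) = (\<integral>\<^sup>+x\<in>A. ?g x \<partial>M)" .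
    next
      have "(SUP i. U i) = (\<lambda>x. SUP i. U i x)" by (rule ext) (simp only: SUP_apply)
      also have "\<dots> \<in> borel_measurable M" by measurable
      finally show "(SUP i. U i) \<in> borel_measurable M" .
    next
      show "?g \<in> borel_measurable F" by (rule gF)
    qed
    have "AE x in M. \<forall>i. (\<integral>\<^sup>+y. U i y \<partial>k x) = nn_cond_exp M F (U i) x"
      using seq(3) by (simp add: AE_all_countable)
    then show ?case using key AE_space
    proof eventually_elim
      case (elim x)
      have "(\<integral>\<^sup>+y. (SUP i. U i) y \<partial>k x) = (\<integral>\<^sup>+y. (SUP i. U i y) \<partial>k x)" by (simp only: SUP_apply)
      also have "\<dots> = (SUP i. \<integral>\<^sup>+y. U i y \<partial>k x)"
        by (rule nn_integral_monotone_convergence_SUP) (auto intro: seq(4) meas_in_kernel[OF k elim(3)])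
      also have "\<dots> = ?g x" using elim(1) by simp
      finally show ?case using elim(2) by (rule trans)
    qed
  }
qed


lemma key_pt:
  assumes e: "markov_kernel M e" and sub: "subalgebra M F" and inv: "sets F \<subseteq> invariant_sets M e"
    and AF: "A \<in> sets F" and C: "C \<in> sets M"
  shows "AE y in M. measure (e y) C * indicator A y = measure (e y) (A \<inter> C)"
proof -
  have spF: "space F = space M" using sub unfolding subalgebra_def by simp
  have AcF: "space M - A \<in> sets F" using AF spF by (metis sets.compl_sets)
  have AM: "A \<in> sets M" "space M - A \<in> sets M" using AF AcF sub unfolding subalgebra_def by auto
  have i1: "AE y in M. measure (e y) A = indicator A y" using inv AF unfolding invariant_sets_def by auto
  have i2: "AE y in M. measure (e y) (space M - A) = indicator (space M - A) y"
    using inv AcF unfolding invariant_sets_def by auto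
  show ?thesis using i1 i2 AE_space
  proof eventually_elim
    case (elim y)
    interpret P: prob_space "e y" by (rule mk_basic(2)[OF e elim(3)])
    have sy: "sets (e y) = sets M" by (rule mk_basic(1)[OF e elim(3)])
    show ?case
    proof (cases "y \<in> A")
      case True
      then have z: "measure (e y) (space M - A) = 0" using elim(2) by simp
      have "measure (e y) (C - A) \<le> measure (e y) (space M - A)"
        by (rule P.finite_measure_mono) (use C AM sy sets.sets_into_space in auto)
      then have z2: "measure (e y) (C - A) = 0" using z by (simp add: measure_nonneg antisym)
      have "C = (A \<inter> C) \<union> (C - A)" by auto
      then have "measure (e y) C = measure (e y) (A \<inter> C) + measure (e y) (C - A)"
        by (metis P.finite_measure_Union Diff_disjoint Int_Diff_disjoint inf_commute sets.Diff sets.Int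
              C AM(1) sy)
      then show ?thesis using True z2 by simp
    next
      case False
      then have z: "measure (e y) A = 0" using elim(1) by simp
      have "measure (e y) (A \<inter> C) \<le> measure (e y) A"
        by (rule P.finite_measure_mono) (use AM sy in auto)
      then have "measure (e y) (A \<inter> C) = 0" using z by (simp add: measure_nonneg antisym)
      then show ?thesis using False by simp
    qed
  qed
qed


theorem theorem4p13:
  fixes M :: "'a::polish_space measure" and F :: "'a measure"
    and e eF :: "'a \<Rightarrow> 'a measure"
  assumes "prob_space M" and "sets M = sets borel"
    and "markov_kernel M e" and "kernel_preserves M e" and "kernel_idempotent M e"
    and "subalgebra M F"
    and "is_reg_cond_prob M F eF"
  shows "sets F \<subseteq> invariant_sets M e \<longleftrightarrow> kernel_le M eF e"
proof -
  note pM = assms(1) and e = assms(3) and pres = assms(4) and sub = assms(6) and rcpF = assms(7)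
  interpret M: prob_space M by (rule pM)
  interpret S: sigma_finite_subalgebra M F by (rule sfs[OF pM sub])
  have eF: "markov_kernel M eF" using rcpF unfolding is_reg_cond_prob_def by simp
  have rcp: "AE x in M. measure (eF x) A = real_cond_exp M F (indicator A) x" if "A \<in> sets M" for A
    using rcpF that unfolding is_reg_cond_prob_def by simp
  have intind: "integrable M (indicator A :: 'a \<Rightarrow> real)" if "A \<in> sets M" for A
    by (rule integrable_real_indicator[OF that]) (simp add: less_top[symmetric])
  show ?thesis
  proof
    assume inv: "sets F \<subseteq> invariant_sets M e"
    have a: "kernel_ae_eq M (kcomp eF e) eF" unfolding kernel_ae_eq_def
    proof
      fix C assume C: "C \<in> sets M"
      let ?g = "real_cond_exp M F (indicator C)"
      have "AE x in M. (\<integral>y. measure (eF y) C \<partial>e x) = (\<integral>y. ?g y \<partial>e x)"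
        by (rule ae_cong_kernel[OF pM e pres mk_meas[OF eF C] borel_measurable_cond_exp2 rcp[OF C]])
      moreover have "AE x in M. (\<integral>y. ?g y \<partial>e x) = ?g x"
        by (rule inv_level[OF e sub inv borel_measurable_cond_exp])
      ultimately show "AE x in M. measure (kcomp eF e x) C = measure (eF x) C"
        using rcp[OF C] AE_space
      proof eventually_elim
        case (elim x)
        then show ?case using kcomp_measure[OF e eF elim(4) C] by simp
      qed
    qed
    have b: "kernel_ae_eq M (kcomp e eF) eF" unfolding kernel_ae_eq_def
    proof
      fix C assume C: "C \<in> sets M"
      let ?phi = "\<lambda>y. measure (e y) C"
      have phim: "?phi \<in> borel_measurable M" by (rule mk_meas[OF e C])
      have R1: "AE x in M. (\<integral>\<^sup>+y. ennreal (?phi y) \<partial>eF x) = nn_cond_exp M F (\<lambda>y. ennreal (?phi y)) x"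
        by (rule rcp_nn[OF pM sub rcpF]) (use phim in measurable)
      have R2: "AE x in M. emeasure (eF x) C = nn_cond_exp M F (indicator C) x"
        by (rule rcp_set[OF pM sub rcpF C])
      have R3: "AE x in M. nn_cond_exp M F (indicator C) x = nn_cond_exp M F (\<lambda>y. ennreal (?phi y)) x"
      proof (rule S.nn_cond_exp_charact)
        fix A assume AF: "A \<in> sets F"
        then have AM: "A \<in> sets M" using sub unfolding subalgebra_def by auto
        have ACM: "A \<inter> C \<in> sets M" using AM C by auto
        have "(\<integral>\<^sup>+x\<in>A. ennreal (?phi x) \<partial>M) = (\<integral>\<^sup>+x. ennreal (measure (e x) (A \<inter> C)) \<partial>M)"
        proof (rule nn_integral_cong_AE)
          show "AE x in M. ennreal (?phi x) * indicator A x = ennreal (measure (e x) (A \<inter> C))"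
            using key_pt[OF e sub inv AF C]
          proof eventually_elim
            case (elim x)
            then show ?case by (cases "x \<in> A") simp_all
          qed
        qed
        also have "\<dots> = ennreal (\<integral>x. measure (e x) (A \<inter> C) \<partial>M)"
          by (rule nn_integral_eq_integral)
             (auto intro!: int_bounded[OF pM mk_meas[OF e ACM], of 1] prob_space.prob_le_1 mk_basic(2)[OF e])
        also have "\<dots> = ennreal (measure M (A \<inter> C))"
          using pres ACM unfolding kernel_preserves_def by simp
        also have "\<dots> = emeasure M (A \<inter> C)" by (simp add: M.emeasure_eq_measure)
        also have "\<dots> = (\<integral>\<^sup>+x. indicator A x * indicator C x \<partial>M)"
          using ACM by (simp add: indicator_inter_arith[symmetric])
        also have "\<dots> = (\<integral>\<^sup>+x. indicator A x * nn_cond_exp M F (indicator C) x \<partial>M)"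
          by (rule S.nn_cond_exp_intg[symmetric]) (use AF C in auto)
        also have "\<dots> = (\<integral>\<^sup>+x\<in>A. nn_cond_exp M F (indicator C) x \<partial>M)"
          by (simp add: mult.commute)
        finally show "(\<integral>\<^sup>+x\<in>A. ennreal (?phi x) \<partial>M) = (\<integral>\<^sup>+x\<in>A. nn_cond_exp M F (indicator C) x \<partial>M)" .
      qed (use phim in simp_all)
      show "AE x in M. measure (kcomp e eF x) C = measure (eF x) C"
        using R1 R2 R3 AE_space
      proof eventually_elim
        case (elim x)
        interpret P: prob_space "eF x" by (rule mk_basic(2)[OF eF elim(4)])
        have "ennreal (measure (kcomp e eF x) C) = ennreal (\<integral>y. ?phi y \<partial>eF x)"
          using kcomp_measure[OF eF e elim(4) C] by simp
        also have "\<dots> = (\<integral>\<^sup>+y. ennreal (?phi y) \<partial>eF x)"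
          by (rule nn_integral_eq_integral[symmetric])
             (auto intro!: int_bounded[of _ _ 1] meas_in_kernel[OF eF elim(4) phim] P.prob_space_axioms
               prob_space.prob_le_1 mk_basic(2)[OF e] simp: mk_basic[OF eF elim(4)])
        also have "\<dots> = emeasure (eF x) C" using elim(1-3) by simp
        also have "\<dots> = ennreal (measure (eF x) C)" by (rule P.emeasure_eq_measure)
        finally show ?case
          by (subst (asm) ennreal_inj) (auto simp: measure_nonneg)
      qed
    qed
    show "kernel_le M eF e" unfolding kernel_le_def using a b by simp
  next
    assume le: "kernel_le M eF e"
    show "sets F \<subseteq> invariant_sets M e"
    proof
      fix B assume BF: "B \<in> sets F"
      then have BM: "B \<in> sets M" using sub unfolding subalgebra_def by auto
      have h1: "AE x in M. measure (kcomp eF e x) B = measure (eF x) B"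
        using le BM unfolding kernel_le_def kernel_ae_eq_def by simp
      have "AE y in M. real_cond_exp M F (indicator B) y = indicator B y"
        by (rule S.real_cond_exp_F_meas[OF intind[OF BM]]) (use BF in simp)
      then have h2: "AE y in M. measure (eF y) B = indicator B y"
        using rcp[OF BM] by eventually_elim simp
      have h3: "AE x in M. (\<integral>y. measure (eF y) B \<partial>e x) = (\<integral>y. indicator B y \<partial>e x)"
        by (rule ae_cong_kernel[OF pM e pres mk_meas[OF eF BM] _ h2]) (use BM in simp)
      have "AE x in M. measure (e x) B = indicator B x"
        using h1 h2 h3 AE_space
      proof eventually_elim
        case (elim x)
        have "measure (e x) B = (\<integral>y. indicator B y \<partial>e x)"
          using BM sets.sets_into_space[OF BM] by (simp add: mk_basic[OF e elim(4)] Int_absorb2)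
        also have "\<dots> = measure (kcomp eF e x) B"
          using elim(3) kcomp_measure[OF e eF elim(4) BM] by simp
        finally show ?case using elim(1,2) by simp
      qed
      then show "B \<in> invariant_sets M e" unfolding invariant_sets_def using BM by simp
    qed
  qed
qed

end
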